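(* Let $M$ be a centrally endo-AIP, semi-projective, retractable right $R$-module with finite uniform dimension. Then $S=\mathrm{End}_R(M)$ is a quasi-Baer ring.
   Context: For $N\le M$, $l_S(N)=\{\phi\in S:\phi(N)=0\}$. An ideal $I$ of $S$ is centrally s-unital if for every $a\in I$ there is $z\in I$ central in $S$ with $az=a$. $M$ is centrally endo-AIP if $l_S(N)$ is a centrally s-unital ideal of $S$ for every fully invariant submodule $N$ of $M$. $M$ is semi-projective if $T=\mathrm{Hom}_R(M,TM)$ for every cyclic right ideal $T$ of $S$. $M$ is retractable if $\mathrm{Hom}_R(M,N)\neq 0$ for every nonzero submodule $N$ of $M$. $M$ has finite uniform dimension if it has an essential submodule that is a finite direct sum of uniform submodules. A ring is quasi-Baer if the right annihilator of every ideal is generated, as a right ideal, by an idempotent. *)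

theory Defs
  imports Main
begin

text \<open>A right R-module structure on the abelian group 'm (the whole type), with
  scalar action sm :: 'm => 'r => 'm, R a (not necessarily commutative) unital ring.\<close>

definition right_module :: "('m::ab_group_add \<Rightarrow> 'r::ring_1 \<Rightarrow> 'm) \<Rightarrow> bool" where
  "right_module sm \<longleftrightarrow>
     (\<forall>x y r. sm (x + y) r = sm x r + sm y r) \<and>
     (\<forall>x r s. sm x (r + s) = sm x r + sm x s) \<and>
     (\<forall>x r s. sm x (r * s) = sm (sm x r) s) \<and>
     (\<forall>x. sm x 1 = x)"

definition submodule :: "('m::ab_group_add \<Rightarrow> 'r::ring_1 \<Rightarrow> 'm) \<Rightarrow> 'm set \<Rightarrow> bool" where
  "submodule sm N \<longleftrightarrow> 0 \<in> N \<and> (\<forall>x\<in>N. \<forall>y\<in>N. x + y \<in> N) \<and> (\<forall>x\<in>N. - x \<in> N)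
     \<and> (\<forall>x\<in>N. \<forall>r. sm x r \<in> N)"

definition gen_submodule :: "('m::ab_group_add \<Rightarrow> 'r::ring_1 \<Rightarrow> 'm) \<Rightarrow> 'm set \<Rightarrow> 'm set" where
  "gen_submodule sm A = \<Inter>{N. submodule sm N \<and> A \<subseteq> N}"

text \<open>S = End_R(M): additive R-linear maps M -> M; ring operations: pointwise
  addition, composition as multiplication (phi psi = phi o psi), identity as 1.\<close>
definition End :: "('m::ab_group_add \<Rightarrow> 'r::ring_1 \<Rightarrow> 'm) \<Rightarrow> ('m \<Rightarrow> 'm) set" where
  "End sm = {f. (\<forall>x y. f (x + y) = f x + f y) \<and> (\<forall>x r. f (sm x r) = sm (f x) r)}"

definition central_in :: "('m \<Rightarrow> 'm) set \<Rightarrow> ('m \<Rightarrow> 'm) \<Rightarrow> bool" where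
  "central_in S z \<longleftrightarrow> z \<in> S \<and> (\<forall>f\<in>S. f \<circ> z = z \<circ> f)"

definition ring_ideal :: "('m::ab_group_add \<Rightarrow> 'm) set \<Rightarrow> ('m \<Rightarrow> 'm) set \<Rightarrow> bool" where
  "ring_ideal S I \<longleftrightarrow> I \<subseteq> S \<and> (\<lambda>_. 0) \<in> I \<and> (\<forall>f\<in>I. \<forall>g\<in>I. (\<lambda>x. f x + g x) \<in> I)
     \<and> (\<forall>f\<in>I. (\<lambda>x. - f x) \<in> I) \<and> (\<forall>f\<in>I. \<forall>s\<in>S. s \<circ> f \<in> I \<and> f \<circ> s \<in> I)"

definition l_ann :: "('m::ab_group_add \<Rightarrow> 'r::ring_1 \<Rightarrow> 'm) \<Rightarrow> 'm set \<Rightarrow> ('m \<Rightarrow> 'm) set" where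
  "l_ann sm N = {f \<in> End sm. \<forall>x\<in>N. f x = 0}"

definition fully_invariant :: "('m::ab_group_add \<Rightarrow> 'r::ring_1 \<Rightarrow> 'm) \<Rightarrow> 'm set \<Rightarrow> bool" where
  "fully_invariant sm N \<longleftrightarrow> submodule sm N \<and> (\<forall>f\<in>End sm. f ` N \<subseteq> N)"

definition centrally_s_unital :: "('m \<Rightarrow> 'm) set \<Rightarrow> ('m \<Rightarrow> 'm) set \<Rightarrow> bool" where
  "centrally_s_unital S I \<longleftrightarrow> (\<forall>a\<in>I. \<exists>z\<in>I. central_in S z \<and> a \<circ> z = a)"

definition centrally_endo_AIP :: "('m::ab_group_add \<Rightarrow> 'r::ring_1 \<Rightarrow> 'm) \<Rightarrow> bool" where
  "centrally_endo_AIP sm \<longleftrightarrow>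
     (\<forall>N. fully_invariant sm N \<longrightarrow>
        ring_ideal (End sm) (l_ann sm N) \<and> centrally_s_unital (End sm) (l_ann sm N))"

definition TM :: "('m::ab_group_add \<Rightarrow> 'r::ring_1 \<Rightarrow> 'm) \<Rightarrow> ('m \<Rightarrow> 'm) set \<Rightarrow> 'm set" where
  "TM sm T = gen_submodule sm (\<Union>t\<in>T. range t)"

text \<open>Hom_R(M, N) viewed inside S.\<close>
definition Hom_into :: "('m::ab_group_add \<Rightarrow> 'r::ring_1 \<Rightarrow> 'm) \<Rightarrow> 'm set \<Rightarrow> ('m \<Rightarrow> 'm) set" where
  "Hom_into sm N = {f \<in> End sm. range f \<subseteq> N}"

definition semi_projective :: "('m::ab_group_add \<Rightarrow> 'r::ring_1 \<Rightarrow> 'm) \<Rightarrow> bool" where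
  "semi_projective sm \<longleftrightarrow>
     (\<forall>\<phi>\<in>End sm. let T = {\<phi> \<circ> s | s. s \<in> End sm} in T = Hom_into sm (TM sm T))"

definition retractable :: "('m::ab_group_add \<Rightarrow> 'r::ring_1 \<Rightarrow> 'm) \<Rightarrow> bool" where
  "retractable sm \<longleftrightarrow>
     (\<forall>N. submodule sm N \<and> N \<noteq> {0} \<longrightarrow> (\<exists>f\<in>Hom_into sm N. f \<noteq> (\<lambda>_. 0)))"

definition essential :: "('m::ab_group_add \<Rightarrow> 'r::ring_1 \<Rightarrow> 'm) \<Rightarrow> 'm set \<Rightarrow> 'm set \<Rightarrow> bool" where
  "essential sm E A \<longleftrightarrow> submodule sm E \<and> E \<subseteq> A \<and>
     (\<forall>N. submodule sm N \<and> N \<subseteq> A \<and> N \<noteq> {0} \<longrightarrow> N \<inter> E \<noteq> {0})"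

definition uniform :: "('m::ab_group_add \<Rightarrow> 'r::ring_1 \<Rightarrow> 'm) \<Rightarrow> 'm set \<Rightarrow> bool" where
  "uniform sm U \<longleftrightarrow> submodule sm U \<and> U \<noteq> {0} \<and>
     (\<forall>A B. submodule sm A \<and> submodule sm B \<and> A \<subseteq> U \<and> B \<subseteq> U \<and> A \<noteq> {0} \<and> B \<noteq> {0}
        \<longrightarrow> A \<inter> B \<noteq> {0})"

definition finite_direct_sum_of_uniform ::
  "('m::ab_group_add \<Rightarrow> 'r::ring_1 \<Rightarrow> 'm) \<Rightarrow> 'm set \<Rightarrow> bool" where
  "finite_direct_sum_of_uniform sm E \<longleftrightarrow>
     (\<exists>n::nat. \<exists>U::nat \<Rightarrow> 'm set. (\<forall>i<n. uniform sm (U i)) \<and>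
        E = {\<Sum>i<n. x i | x. \<forall>i<n. x i \<in> U i} \<and>
        (\<forall>x. (\<forall>i<n. x i \<in> U i) \<and> (\<Sum>i<n. x i) = 0 \<longrightarrow> (\<forall>i<n. x i = 0)))"

definition finite_uniform_dimension :: "('m::ab_group_add \<Rightarrow> 'r::ring_1 \<Rightarrow> 'm) \<Rightarrow> bool" where
  "finite_uniform_dimension sm \<longleftrightarrow>
     (\<exists>E. essential sm E UNIV \<and> finite_direct_sum_of_uniform sm E)"

definition r_ann :: "('m \<Rightarrow> 'm) set \<Rightarrow> ('m \<Rightarrow> 'm) set \<Rightarrow> ('m::zero \<Rightarrow> 'm) set" where
  "r_ann S I = {f \<in> S. \<forall>g\<in>I. g \<circ> f = (\<lambda>_. 0)}"

definition quasi_Baer_End :: "('m::ab_group_add \<Rightarrow> 'r::ring_1 \<Rightarrow> 'm) \<Rightarrow> bool" where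
  "quasi_Baer_End sm \<longleftrightarrow>
     (\<forall>I. ring_ideal (End sm) I \<longrightarrow>
        (\<exists>e\<in>End sm. e \<circ> e = e \<and> r_ann (End sm) I = {e \<circ> s | s. s \<in> End sm}))"

end

theory Submission
  imports Defs
begin



lemma sm_zero: assumes "right_module sm" shows "sm 0 r = 0"
proof -
  have "sm (0+0) r = sm 0 r + sm 0 r" using assms unfolding right_module_def by blast
  thus ?thesis by simp
qed

lemma sm_neg: assumes "right_module sm" shows "sm (- x) r = - sm x r"
proof -
  have "sm (x + - x) r = sm x r + sm (-x) r" using assms unfolding right_module_def by blast
  thus ?thesis using sm_zero[OF assms] by (simp add: eq_neg_iff_add_eq_0 add.commute)
qed

lemma sm_add: "right_module sm \<Longrightarrow> sm (x + y) r = sm x r + sm y r"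
  unfolding right_module_def by blast

lemma sm_diff: assumes "right_module sm" shows "sm (x - y) r = sm x r - sm y r"
  using sm_add[OF assms, of x "-y" r] sm_neg[OF assms] by simp

lemma sm_sum: assumes "right_module sm" shows "sm (sum c A) r = (\<Sum>i\<in>A. sm (c i) r)"
  by (induction A rule: infinite_finite_induct) (auto simp: sm_zero[OF assms] sm_add[OF assms])

lemma End_add: "f \<in> End sm \<Longrightarrow> f (x + y) = f x + f y" unfolding End_def by blast
lemma End_sm: "f \<in> End sm \<Longrightarrow> f (sm x r) = sm (f x) r" unfolding End_def by blast
lemma End_zero: assumes "f \<in> End sm" shows "f 0 = 0"
proof -
  have "f (0+0) = f 0 + f 0" using End_add[OF assms] by blast
  thus ?thesis by simp
qed
lemma End_neg: assumes "f \<in> End sm" shows "f (- x) = - f x"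
proof -
  have "f (x + - x) = f x + f (-x)" using End_add[OF assms] by blast
  thus ?thesis using End_zero[OF assms] by (simp add: eq_neg_iff_add_eq_0 add.commute)
qed
lemma End_diff: assumes "f \<in> End sm" shows "f (x - y) = f x - f y"
  using End_add[OF assms, of x "-y"] End_neg[OF assms] by simp

lemma End_comp: "f \<in> End sm \<Longrightarrow> g \<in> End sm \<Longrightarrow> f \<circ> g \<in> End sm"
  unfolding End_def by auto
lemma End_plus: "right_module sm \<Longrightarrow> f \<in> End sm \<Longrightarrow> g \<in> End sm \<Longrightarrow> (\<lambda>x. f x + g x) \<in> End sm"
  unfolding End_def by (auto simp: sm_add algebra_simps)
lemma End_minus: "right_module sm \<Longrightarrow> f \<in> End sm \<Longrightarrow> g \<in> End sm \<Longrightarrow> (\<lambda>x. f x - g x) \<in> End sm"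
  unfolding End_def by (auto simp: sm_diff algebra_simps)
lemma End_id: "id \<in> End sm" unfolding End_def by auto

lemma submodule_Inter: "(\<forall>N\<in>F. submodule sm N) \<Longrightarrow> submodule sm (\<Inter>F)"
  unfolding submodule_def by auto
lemma submodule_UNIV: "submodule sm UNIV" unfolding submodule_def by auto
lemma submodule_Int: "submodule sm A \<Longrightarrow> submodule sm B \<Longrightarrow> submodule sm (A \<inter> B)"
  unfolding submodule_def by auto
lemma gen_sub: "submodule sm (gen_submodule sm A)"
  unfolding gen_submodule_def by (rule submodule_Inter) auto
lemma gen_sup: "A \<subseteq> gen_submodule sm A" unfolding gen_submodule_def by auto
lemma gen_least: "submodule sm P \<Longrightarrow> A \<subseteq> P \<Longrightarrow> gen_submodule sm A \<subseteq> P"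
  unfolding gen_submodule_def by auto

lemma End_facts: assumes "f \<in> End sm"
  shows "f 0 = 0" "\<And>x y. f (x + y) = f x + f y" "\<And>x. f (- x) = - f x" "\<And>x r. f (sm x r) = sm (f x) r"
  using End_zero[OF assms] End_add[OF assms] End_neg[OF assms] End_sm[OF assms] by auto

lemma preimage_sub: assumes "right_module sm" "f \<in> End sm" "submodule sm P"
  shows "submodule sm {x. f x \<in> P}"
proof -
  have P: "0 \<in> P" "\<And>x y. x \<in> P \<Longrightarrow> y \<in> P \<Longrightarrow> x + y \<in> P" "\<And>x. x \<in> P \<Longrightarrow> - x \<in> P"
    "\<And>x r. x \<in> P \<Longrightarrow> sm x r \<in> P" using assms(3) unfolding submodule_def by auto
  note F = End_facts[OF assms(2)]
  show ?thesis unfolding submodule_def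
    using P by (auto simp: F)
qed

lemma ker_sub: assumes "right_module sm" "f \<in> End sm" shows "submodule sm {x. f x = 0}"
proof -
  note F = End_facts[OF assms(2)]
  show ?thesis unfolding submodule_def by (auto simp: F sm_zero[OF assms(1)])
qed

lemma range_sub: assumes "right_module sm" "f \<in> End sm" shows "submodule sm (range f)"
proof -
  note F = End_facts[OF assms(2)]
  have "0 \<in> range f" using F(1) by (metis rangeI)
  moreover have "x + y \<in> range f" if h: "x \<in> range f" "y \<in> range f" for x y
  proof -
    obtain a b where "x = f a" "y = f b" using h by blast
    then have "x + y = f (a + b)" by (simp add: F)
    then show ?thesis by simp
  qed
  moreover have "- x \<in> range f" if h: "x \<in> range f" for x
  proof -
    obtain a where "x = f a" using h by blast
    then have "- x = f (- a)" by (simp add: F)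
    then show ?thesis by simp
  qed
  moreover have "sm x r \<in> range f" if h: "x \<in> range f" for x r
  proof -
    obtain a where "x = f a" using h by blast
    then have "sm x r = f (sm a r)" by (simp add: F)
    then show ?thesis by simp
  qed
  ultimately show ?thesis unfolding submodule_def by blast
qed

lemma submodule_sum: assumes "submodule sm K" "\<forall>i\<in>A. c i \<in> K" shows "sum c A \<in> K"
  using assms(2) proof (induction A rule: infinite_finite_induct)
  case (infinite A) then show ?case using assms(1) unfolding submodule_def by simp
next
  case empty then show ?case using assms(1) unfolding submodule_def by simp
next
  case (insert x F) then show ?case using assms(1) unfolding submodule_def by simp
qed




lemma TM_fi: assumes "right_module sm" "T \<subseteq> End sm" "\<forall>f\<in>End sm. \<forall>t\<in>T. f \<circ> t \<in> T"
  shows "fully_invariant sm (TM sm T)"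
  unfolding fully_invariant_def
proof (intro conjI ballI)
  show "submodule sm (TM sm T)" unfolding TM_def by (rule gen_sub)
  fix f assume f: "f \<in> End sm"
  have "TM sm T \<subseteq> {x. f x \<in> TM sm T}"
    unfolding TM_def
  proof (rule gen_least)
    show "submodule sm {x. f x \<in> gen_submodule sm (\<Union>t\<in>T. range t)}"
      by (rule preimage_sub[OF assms(1) f gen_sub])
    show "(\<Union>t\<in>T. range t) \<subseteq> {x. f x \<in> gen_submodule sm (\<Union>t\<in>T. range t)}"
    proof
      fix y assume "y \<in> (\<Union>t\<in>T. range t)"
      then obtain t x where t: "t \<in> T" "y = t x" by blast
      have "f \<circ> t \<in> T" using assms(3) f t(1) by blast
      moreover have "f y = (f \<circ> t) x" using t(2) by simp
      ultimately have "f y \<in> (\<Union>t\<in>T. range t)" by blast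
      then show "y \<in> {x. f x \<in> gen_submodule sm (\<Union>t\<in>T. range t)}" using gen_sup[of "\<Union>t\<in>T. range t" sm] by blast
    qed
  qed
  then show "f ` TM sm T \<subseteq> TM sm T" by blast
qed

lemma l_ann_TM: assumes "right_module sm" "T \<subseteq> End sm"
  shows "l_ann sm (TM sm T) = {f\<in>End sm. \<forall>t\<in>T. f \<circ> t = (\<lambda>_. 0)}"
proof
  show "l_ann sm (TM sm T) \<subseteq> {f\<in>End sm. \<forall>t\<in>T. f \<circ> t = (\<lambda>_. 0)}"
  proof
    fix f assume f: "f \<in> l_ann sm (TM sm T)"
    have "f \<circ> t = (\<lambda>_. 0)" if t: "t \<in> T" for t
    proof
      fix x
      have "t x \<in> TM sm T" unfolding TM_def using gen_sup[of "\<Union>t\<in>T. range t" sm] t by blast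
      then show "(f \<circ> t) x = 0" using f unfolding l_ann_def by auto
    qed
    then show "f \<in> {f\<in>End sm. \<forall>t\<in>T. f \<circ> t = (\<lambda>_. 0)}" using f unfolding l_ann_def by auto
  qed
next
  show "{f\<in>End sm. \<forall>t\<in>T. f \<circ> t = (\<lambda>_. 0)} \<subseteq> l_ann sm (TM sm T)"
  proof
    fix f assume f: "f \<in> {f\<in>End sm. \<forall>t\<in>T. f \<circ> t = (\<lambda>_. 0)}"
    have fE: "f \<in> End sm" using f by blast
    have "TM sm T \<subseteq> {x. f x = 0}" unfolding TM_def
    proof (rule gen_least)
      show "submodule sm {x. f x = 0}" by (rule ker_sub[OF assms(1) fE])
      show "(\<Union>t\<in>T. range t) \<subseteq> {x. f x = 0}"
      proof
        fix y assume "y \<in> (\<Union>t\<in>T. range t)"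
        then obtain t x where t: "t \<in> T" "y = t x" by blast
        have "f \<circ> t = (\<lambda>_. 0)" using f t(1) by blast
        then have "f (t x) = 0" by (simp add: fun_eq_iff)
        then show "y \<in> {x. f x = 0}" using t by simp
      qed
    qed
    then show "f \<in> l_ann sm (TM sm T)" unfolding l_ann_def using fE by blast
  qed
qed

lemma semiprime: assumes rm: "right_module sm" and aip: "centrally_endo_AIP sm"
  and a: "a \<in> End sm" and h: "\<forall>s\<in>End sm. a \<circ> s \<circ> a = (\<lambda>_. 0)"
  shows "a = (\<lambda>_. 0)"
proof -
  define T where "T = {s \<circ> a | s. s \<in> End sm}"
  have TS: "T \<subseteq> End sm" unfolding T_def using End_comp a by blast
  have Tc: "\<forall>f\<in>End sm. \<forall>t\<in>T. f \<circ> t \<in> T"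
  proof (intro ballI)
    fix f t assume f: "f \<in> End sm" and t: "t \<in> T"
    then obtain s where s: "s \<in> End sm" "t = s \<circ> a" unfolding T_def by blast
    have "f \<circ> t = (f \<circ> s) \<circ> a" using s(2) by (simp add: comp_assoc)
    moreover have "f \<circ> s \<in> End sm" using End_comp f s(1) by blast
    ultimately show "f \<circ> t \<in> T" unfolding T_def by blast
  qed
  have fi: "fully_invariant sm (TM sm T)" by (rule TM_fi[OF rm TS Tc])
  have su: "centrally_s_unital (End sm) (l_ann sm (TM sm T))"
    using aip fi unfolding centrally_endo_AIP_def by blast
  have "a \<circ> t = (\<lambda>_. 0)" if t: "t \<in> T" for t
  proof -
    obtain s where s: "s \<in> End sm" "t = s \<circ> a" using t unfolding T_def by blast
    have "a \<circ> t = a \<circ> s \<circ> a" using s(2) by (simp add: comp_assoc)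
    then show ?thesis using h s(1) by simp
  qed
  then have aL: "a \<in> l_ann sm (TM sm T)" unfolding l_ann_TM[OF rm TS] using a by blast
  obtain z where z: "z \<in> l_ann sm (TM sm T)" "central_in (End sm) z" "a \<circ> z = a"
    using su aL unfolding centrally_s_unital_def by blast
  have "id \<circ> a \<in> T" unfolding T_def using End_id by blast
  then have "z \<circ> (id \<circ> a) = (\<lambda>_. 0)" using z(1) unfolding l_ann_TM[OF rm TS] by blast
  moreover have "a \<circ> z = z \<circ> a" using z(2) a unfolding central_in_def by blast
  ultimately show ?thesis using z(3) by (metis id_comp)
qed




lemma ideal_facts: assumes "ring_ideal S I"
  shows "I \<subseteq> S" "(\<lambda>_. 0) \<in> I" "\<And>f g. f \<in> I \<Longrightarrow> g \<in> I \<Longrightarrow> (\<lambda>x. f x + g x) \<in> I"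
    "\<And>f. f \<in> I \<Longrightarrow> (\<lambda>x. - f x) \<in> I" "\<And>f s. f \<in> I \<Longrightarrow> s \<in> S \<Longrightarrow> s \<circ> f \<in> I"
    "\<And>f s. f \<in> I \<Longrightarrow> s \<in> S \<Longrightarrow> f \<circ> s \<in> I"
  using assms unfolding ring_ideal_def by blast+

lemma ideal_diff: assumes "ring_ideal S I" "f \<in> I" "g \<in> I" shows "(\<lambda>x. f x - g x) \<in> I"
proof -
  have "(\<lambda>x. - g x) \<in> I" using ideal_facts(4)[OF assms(1) assms(3)] .
  then have "(\<lambda>x. f x + (\<lambda>x. - g x) x) \<in> I" using ideal_facts(3)[OF assms(1) assms(2)] by blast
  then show ?thesis by simp
qed

lemma central_comm: "central_in (End sm) z \<Longrightarrow> f \<in> End sm \<Longrightarrow> f (z x) = z (f x)"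
  unfolding central_in_def by (metis comp_apply)

lemma central_End: "central_in S z \<Longrightarrow> z \<in> S"
  unfolding central_in_def by blast

lemma central_diff: assumes rm: "right_module sm" and a: "central_in (End sm) a" and b: "central_in (End sm) b"
  shows "central_in (End sm) (\<lambda>x. a x - b x)"
  unfolding central_in_def
proof (intro conjI ballI)
  show "(\<lambda>x. a x - b x) \<in> End sm" using End_minus[OF rm central_End[OF a] central_End[OF b]] .
  fix f assume f: "f \<in> End sm"
  show "f \<circ> (\<lambda>x. a x - b x) = (\<lambda>x. a x - b x) \<circ> f"
  proof
    fix x
    have "f (a x - b x) = f (a x) - f (b x)" by (rule End_diff[OF f])
    also have "\<dots> = a (f x) - b (f x)" using central_comm[OF a f] central_comm[OF b f] by simp
    finally show "(f \<circ> (\<lambda>x. a x - b x)) x = ((\<lambda>x. a x - b x) \<circ> f) x" by simp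
  qed
qed

lemma chain:
  fixes k :: nat
  assumes rm: "right_module sm" and Li: "ring_ideal (End sm) L"
    and Lu: "centrally_s_unital (End sm) L"
    and nou: "\<not> (\<exists>z\<in>L. \<forall>a\<in>L. a \<circ> z = a)"
  shows "\<exists>z u. z \<in> L \<and> central_in (End sm) z \<and>
     (\<forall>i<k. central_in (End sm) (u i) \<and> u i \<noteq> (\<lambda>_. 0) \<and> u i \<circ> z = u i) \<and>
     (\<forall>i<k. \<forall>j<k. i \<noteq> j \<longrightarrow> u i \<circ> u j = (\<lambda>_. 0))"
proof (induction k)
  case 0
  have "(\<lambda>_. 0) \<in> L" using ideal_facts(2)[OF Li] .
  then obtain z where "z \<in> L" "central_in (End sm) z" using Lu unfolding centrally_s_unital_def by blast
  then show ?case by blast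
next
  case (Suc k)
  then obtain z u where z: "z \<in> L" "central_in (End sm) z"
    and u: "\<forall>i<k. central_in (End sm) (u i) \<and> u i \<noteq> (\<lambda>_. 0) \<and> u i \<circ> z = u i"
    and uo: "\<forall>i<k. \<forall>j<k. i \<noteq> j \<longrightarrow> u i \<circ> u j = (\<lambda>_. 0)" by blast
  have LS: "L \<subseteq> End sm" using ideal_facts(1)[OF Li] .
  obtain a where a: "a \<in> L" "a \<circ> z \<noteq> a" using nou z(1) by blast
  obtain w where w: "w \<in> L" "central_in (End sm) w" "z \<circ> w = z"
    using Lu z(1) unfolding centrally_s_unital_def by blast
  obtain v where v: "v \<in> L" "central_in (End sm) v" "a \<circ> v = a"
    using Lu a(1) unfolding centrally_s_unital_def by blast
  have zE: "z \<in> End sm" and aE: "a \<in> End sm" and wE: "w \<in> End sm" and vE: "v \<in> End sm"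
    using LS z(1) a(1) w(1) v(1) by blast+
  have zw: "z (w x) = z x" for x using w(3) by (metis comp_apply)
  have av: "a (v x) = a x" for x using v(3) by (metis comp_apply)
  have wv: "w (v x) = v (w x)" for x using central_comm[OF v(2) wE] by simp
  define z1 where "z1 = (\<lambda>x. w x + v x - w (v x))"
  have "(\<lambda>x. w x + v x) \<in> L" using ideal_facts(3)[OF Li w(1) v(1)] .
  moreover have "w \<circ> v \<in> L" using ideal_facts(6)[OF Li w(1) vE] .
  ultimately have "(\<lambda>x. (\<lambda>x. w x + v x) x - (w \<circ> v) x) \<in> L" by (rule ideal_diff[OF Li])
  then have z1L: "z1 \<in> L" unfolding z1_def by simp
  have z1c: "central_in (End sm) z1" unfolding central_in_def
  proof (intro conjI ballI)
    show "z1 \<in> End sm" using z1L LS by blast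
    fix f assume f: "f \<in> End sm"
    show "f \<circ> z1 = z1 \<circ> f"
    proof
      fix x
      have "f (z1 x) = f (w x) + f (v x) - f (w (v x))" unfolding z1_def
        by (simp add: End_diff[OF f] End_add[OF f])
      also have "\<dots> = z1 (f x)" unfolding z1_def
        using central_comm[OF w(2) f] central_comm[OF v(2) f] by simp
      finally show "(f \<circ> z1) x = (z1 \<circ> f) x" by simp
    qed
  qed
  have zz1: "z (z1 x) = z x" for x
  proof -
    have "z (z1 x) = z (w x) + z (v x) - z (w (v x))" unfolding z1_def
      by (simp add: End_diff[OF zE] End_add[OF zE])
    then show ?thesis using zw by simp
  qed
  have az1: "a \<circ> z1 = a"
  proof
    fix x
    have "a (z1 x) = a (w x) + a (v x) - a (w (v x))" unfolding z1_def
      by (simp add: End_diff[OF aE] End_add[OF aE])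
    also have "\<dots> = a x" using av wv by simp
    finally show "(a \<circ> z1) x = a x" by simp
  qed
  obtain z2 where z2: "z2 \<in> L" "central_in (End sm) z2" "z1 \<circ> z2 = z1"
    using Lu z1L unfolding centrally_s_unital_def by blast
  have z1z2: "z1 (z2 x) = z1 x" for x using z2(3) by (metis comp_apply)
  have zz2: "z (z2 x) = z x" for x
    using zz1[of "z2 x"] z1z2[of x] zz1[of x] by simp
  define u' where "u' = u(k := (\<lambda>x. z1 x - z x))"
  have uk: "central_in (End sm) (u' k) \<and> u' k \<noteq> (\<lambda>_. 0) \<and> u' k \<circ> z2 = u' k"
  proof (intro conjI)
    show "central_in (End sm) (u' k)" unfolding u'_def using central_diff[OF rm z1c z(2)] by simp
    show "u' k \<noteq> (\<lambda>_. 0)"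
    proof
      assume "u' k = (\<lambda>_. 0)"
      then have "z1 = z" unfolding u'_def by (auto simp: fun_eq_iff)
      then show False using az1 a(2) by simp
    qed
    show "u' k \<circ> z2 = u' k" unfolding u'_def using z1z2 zz2 by (auto simp: fun_eq_iff)
  qed
  have ui: "central_in (End sm) (u' i) \<and> u' i \<noteq> (\<lambda>_. 0) \<and> u' i \<circ> z2 = u' i" if i: "i < k" for i
  proof -
    have h: "central_in (End sm) (u i)" "u i \<noteq> (\<lambda>_. 0)" "u i \<circ> z = u i" using u i by auto
    have uz: "u i (z y) = u i y" for y using h(3) by (metis comp_apply)
    have "u i (z2 x) = u i x" for x using uz[of "z2 x"] zz2[of x] uz[of x] by simp
    then show ?thesis using h i unfolding u'_def by (auto simp: fun_eq_iff)
  qed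
  have orth_k: "u i \<circ> (\<lambda>x. z1 x - z x) = (\<lambda>_. 0)" if i: "i < k" for i
  proof
    fix x
    have h: "central_in (End sm) (u i)" "u i \<circ> z = u i" using u i by auto
    have uE: "u i \<in> End sm" using central_End[OF h(1)] .
    have uz: "u i (z y) = u i y" for y using h(2) by (metis comp_apply)
    have "u i (z1 x - z x) = u i (z1 x) - u i (z x)" by (rule End_diff[OF uE])
    also have "\<dots> = 0" using uz[of "z1 x"] zz1[of x] uz[of x] by simp
    finally show "(u i \<circ> (\<lambda>x. z1 x - z x)) x = 0" by simp
  qed
  have orth_k2: "(\<lambda>x. z1 x - z x) \<circ> u i = (\<lambda>_. 0)" if i: "i < k" for i
  proof -
    have "central_in (End sm) (u i)" using u i by auto
    moreover have "(\<lambda>x. z1 x - z x) \<in> End sm" using central_End[OF central_diff[OF rm z1c z(2)]] .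
    ultimately have "(\<lambda>x. z1 x - z x) \<circ> u i = u i \<circ> (\<lambda>x. z1 x - z x)"
      unfolding central_in_def by metis
    then show ?thesis using orth_k[OF i] by simp
  qed
  have "\<forall>i<Suc k. central_in (End sm) (u' i) \<and> u' i \<noteq> (\<lambda>_. 0) \<and> u' i \<circ> z2 = u' i"
    using uk ui less_Suc_eq by auto
  moreover have "\<forall>i<Suc k. \<forall>j<Suc k. i \<noteq> j \<longrightarrow> u' i \<circ> u' j = (\<lambda>_. 0)"
  proof (intro allI impI)
    fix i j assume ij: "i < Suc k" "j < Suc k" "i \<noteq> j"
    show "u' i \<circ> u' j = (\<lambda>_. 0)"
    proof (cases "i = k")
      case True
      then have "j < k" using ij by auto
      then show ?thesis using True orth_k2 unfolding u'_def by simp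
    next
      case False
      then have i: "i < k" using ij by auto
      show ?thesis
      proof (cases "j = k")
        case True then show ?thesis using i orth_k unfolding u'_def by simp
      next
        case False then show ?thesis using i ij uo unfolding u'_def by auto
      qed
    qed
  qed
  ultimately show ?case using z2(1,2) by blast
qed




lemma unif_ess: assumes rm: "right_module sm" and U: "uniform sm U" and K: "submodule sm K"
  and KU: "K \<inter> U \<noteq> {0}" and y: "y \<in> U" "y \<noteq> 0"
  shows "\<exists>r. sm y r \<noteq> 0 \<and> sm y r \<in> K"
proof -
  define C where "C = {sm y r | r. True}"
  have ya: "sm y (r + s) = sm y r + sm y s" for r s using rm unfolding right_module_def by blast
  have ym: "sm (sm y r) s = sm y (r * s)" for r s
  proof -
    have "sm y (r * s) = sm (sm y r) s" using rm unfolding right_module_def by blast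
    then show ?thesis by simp
  qed
  have y1: "sm y 1 = y" using rm unfolding right_module_def by blast
  have y0: "sm y 0 = 0" using ya[of 0 0] by simp
  have yn: "sm y (- r) = - sm y r" for r using ya[of r "-r"] y0 by (simp add: eq_neg_iff_add_eq_0 add.commute)
  have Usub: "submodule sm U" using U unfolding uniform_def by blast
  have Csub: "submodule sm C" unfolding submodule_def C_def
  proof (intro conjI ballI allI)
    have "0 = sm y 0" using y0 by simp
    then show "0 \<in> {sm y r |r. True}" by blast
  next
    fix a b assume "a \<in> {sm y r |r. True}" "b \<in> {sm y r |r. True}"
    then obtain r s where "a = sm y r" "b = sm y s" by blast
    then have "a + b = sm y (r + s)" using ya by simp
    then show "a + b \<in> {sm y r |r. True}" by blast
  next
    fix a assume "a \<in> {sm y r |r. True}"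
    then obtain r where "a = sm y r" by blast
    then have "- a = sm y (- r)" using yn by simp
    then show "- a \<in> {sm y r |r. True}" by blast
  next
    fix a s assume "a \<in> {sm y r |r. True}"
    then obtain r where "a = sm y r" by blast
    then have "sm a s = sm y (r * s)" using ym by simp
    then show "sm a s \<in> {sm y r |r. True}" by blast
  qed
  have CU: "C \<subseteq> U" unfolding C_def using Usub y(1) unfolding submodule_def by blast
  have "y = sm y 1" using y1 by simp
  then have "y \<in> C" unfolding C_def by blast
  then have C0: "C \<noteq> {0}" using y(2) by blast
  have KUsub: "submodule sm (K \<inter> U)" using submodule_Int[OF K Usub] .
  have "C \<inter> (K \<inter> U) \<noteq> {0}" using U Csub KUsub CU C0 KU unfolding uniform_def by blast
  moreover have "0 \<in> C \<inter> (K \<inter> U)" using Csub KUsub unfolding submodule_def by blast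
  ultimately obtain w where "w \<in> C \<inter> (K \<inter> U)" "w \<noteq> 0" by blast
  then show ?thesis unfolding C_def by blast
qed

lemma ess_lemma: fixes n :: nat and U :: "nat \<Rightarrow> 'm::ab_group_add set"
  assumes rm: "right_module sm" and E: "essential sm E UNIV"
  and U: "\<forall>i<n. uniform sm (U i)" and Edef: "E = {\<Sum>i<n. x i | x. \<forall>i<n. x i \<in> U i}"
  and dir: "\<forall>x. (\<forall>i<n. x i \<in> U i) \<and> (\<Sum>i<n. x i) = 0 \<longrightarrow> (\<forall>i<n. x i = 0)"
  and K: "submodule sm K" and KU: "\<forall>i<n. K \<inter> U i \<noteq> {0}"
  and X: "submodule sm X" "X \<noteq> {0}"
  shows "X \<inter> K \<noteq> {0}"
proof -
  have "\<forall>N. submodule sm N \<and> N \<subseteq> UNIV \<and> N \<noteq> {0} \<longrightarrow> N \<inter> E \<noteq> {0}" "submodule sm E"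
    using E unfolding essential_def by blast+
  then have "X \<inter> E \<noteq> {0}" "0 \<in> E" "0 \<in> X" using X unfolding submodule_def by blast+
  then have "X \<inter> E \<noteq> {0}" "0 \<in> X \<inter> E" by blast+
  then obtain x where x: "x \<in> X" "x \<in> E" "x \<noteq> 0" by blast
  then obtain c where c: "\<forall>i<n. c i \<in> U i" "x = (\<Sum>i<n. c i)" using Edef by blast
  have Xs: "\<And>a r. a \<in> X \<Longrightarrow> sm a r \<in> X" using X(1) unfolding submodule_def by blast
  have Us: "\<And>i a r. i < n \<Longrightarrow> a \<in> U i \<Longrightarrow> sm a r \<in> U i"
  proof -
    fix i a r assume "i < n" "a \<in> U i"
    moreover have "submodule sm (U i)" if "i < n" for i using U that unfolding uniform_def by blast
    ultimately show "sm a r \<in> U i" unfolding submodule_def by blast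
  qed
  have Ks: "\<And>a r. a \<in> K \<Longrightarrow> sm a r \<in> K" "0 \<in> K" using K unfolding submodule_def by blast+
  have claim: "j \<le> n \<Longrightarrow> \<exists>c'. (\<forall>i<n. c' i \<in> U i) \<and> (\<Sum>i<n. c' i) \<in> X \<and> (\<Sum>i<n. c' i) \<noteq> 0 \<and> (\<forall>i<j. c' i \<in> K)" for j :: nat
  proof (induction j)
    case 0
    then show ?case using c x by blast
  next
    case (Suc j)
    then obtain c' where c': "\<forall>i<n. c' i \<in> U i" "(\<Sum>i<n. c' i) \<in> X" "(\<Sum>i<n. c' i) \<noteq> 0" "\<forall>i<j. c' i \<in> K"
      by auto
    have jn: "j < n" using Suc.prems by simp
    show ?case
    proof (cases "c' j \<in> K")
      case True
      then have "\<forall>i<Suc j. c' i \<in> K" using c'(4) less_Suc_eq by auto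
      then show ?thesis using c'(1-3) by blast
    next
      case False
      then have "c' j \<noteq> 0" using Ks(2) by auto
      have "\<exists>r. sm (c' j) r \<noteq> 0 \<and> sm (c' j) r \<in> K"
        using unif_ess[OF rm _ K, of "U j" "c' j"] U KU c'(1) jn \<open>c' j \<noteq> 0\<close> by blast
      then obtain r where r: "sm (c' j) r \<noteq> 0" "sm (c' j) r \<in> K" by blast
      define c'' where "c'' = (\<lambda>i. sm (c' i) r)"
      have 1: "\<forall>i<n. c'' i \<in> U i" unfolding c''_def using c'(1) Us by blast
      have "(\<Sum>i<n. c'' i) = sm (\<Sum>i<n. c' i) r" unfolding c''_def by (simp add: sm_sum[OF rm])
      then have 2: "(\<Sum>i<n. c'' i) \<in> X" using Xs c'(2) by simp
      have 3: "(\<Sum>i<n. c'' i) \<noteq> 0"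
      proof
        assume "(\<Sum>i<n. c'' i) = 0"
        then have "c'' j = 0" using dir[rule_format, of c''] 1 jn by blast
        then show False using r(1) unfolding c''_def by simp
      qed
      have 4: "\<forall>i<Suc j. c'' i \<in> K" unfolding c''_def using c'(4) r(2) Ks(1) less_Suc_eq by auto
      show ?thesis using 1 2 3 4 by blast
    qed
  qed
  obtain c' where c': "\<forall>i<n. c' i \<in> U i" "(\<Sum>i<n. c' i) \<in> X" "(\<Sum>i<n. c' i) \<noteq> 0" "\<forall>i<n. c' i \<in> K"
    using claim[of n] by auto
  have "(\<Sum>i<n. c' i) \<in> K" using submodule_sum[OF K, of "{..<n}" c'] c'(4) by blast
  then show ?thesis using c'(2,3) by blast
qed




lemma kernel_type_nonempty:
  fixes n :: nat and U :: "nat \<Rightarrow> 'm::ab_group_add set" and sm :: "'m \<Rightarrow> 'r::ring_1 \<Rightarrow> 'm"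
  assumes rm: "right_module sm" and aip: "centrally_endo_AIP sm" and ret: "retractable sm"
  and E: "essential sm E UNIV"
  and U: "\<forall>i<n. uniform sm (U i)" and Edef: "E = {\<Sum>i<n. x i | x. \<forall>i<n. x i \<in> U i}"
  and dir: "\<forall>x. (\<forall>i<n. x i \<in> U i) \<and> (\<Sum>i<n. x i) = 0 \<longrightarrow> (\<forall>i<n. x i = 0)"
  and uc: "central_in (End sm) u" and u0: "u \<noteq> (\<lambda>_. 0)"
  shows "\<exists>l<n. {x. u x = 0} \<inter> U l = {0}"
proof (rule ccontr)
  assume "\<not> (\<exists>l<n. {x. u x = 0} \<inter> U l = {0})"
  then have KU: "\<forall>l<n. {x. u x = 0} \<inter> U l \<noteq> {0}" by blast
  have uE: "u \<in> End sm" using central_End[OF uc] .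
  have K: "submodule sm {x. u x = 0}" using ker_sub[OF rm uE] .
  have R: "submodule sm (range u)" using range_sub[OF rm uE] .
  obtain x0 where "u x0 \<noteq> 0" using u0 by (auto simp: fun_eq_iff)
  then have R0: "range u \<noteq> {0}" by (metis rangeI singletonD)
  have "range u \<inter> {x. u x = 0} \<noteq> {0}"
    using ess_lemma[OF rm E U Edef dir K KU R R0] .
  moreover have NS: "submodule sm (range u \<inter> {x. u x = 0})" using submodule_Int[OF R K] .
  ultimately obtain f where f: "f \<in> Hom_into sm (range u \<inter> {x. u x = 0})" "f \<noteq> (\<lambda>_. 0)"
    using ret unfolding retractable_def by blast
  have fE: "f \<in> End sm" and fr: "range f \<subseteq> range u \<inter> {x. u x = 0}" using f(1) unfolding Hom_into_def by blast+
  have "\<forall>t\<in>End sm. f \<circ> t \<circ> f = (\<lambda>_. 0)"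
  proof (intro ballI ext)
    fix t x assume t: "t \<in> End sm"
    have "f x \<in> range u" using fr by blast
    then obtain y where y: "f x = u y" by blast
    have "f (t (f x)) = f (t (u y))" using y by simp
    also have "\<dots> = f (u (t y))" using central_comm[OF uc t] by simp
    also have "\<dots> = u (f (t y))" using central_comm[OF uc fE] by simp
    also have "\<dots> = 0" using fr by blast
    finally show "(f \<circ> t \<circ> f) x = 0" by simp
  qed
  then have "f = (\<lambda>_. 0)" using semiprime[OF rm aip fE] by blast
  then show False using f(2) by blast
qed

lemma kernel_type_disjoint:
  fixes U :: "'m::ab_group_add set" and sm :: "'m \<Rightarrow> 'r::ring_1 \<Rightarrow> 'm"
  assumes rm: "right_module sm" and ret: "retractable sm" and U: "uniform sm U"
  and ui: "central_in (End sm) ui" and uj: "central_in (End sm) uj"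
  and orth: "uj \<circ> ui = (\<lambda>_. 0)"
  and ki: "{x. ui x = 0} \<inter> U = {0}" and kj: "{x. uj x = 0} \<inter> U = {0}"
  shows False
proof -
  have "submodule sm U" "U \<noteq> {0}" using U unfolding uniform_def by blast+
  then obtain g where g: "g \<in> Hom_into sm U" "g \<noteq> (\<lambda>_. 0)" using ret unfolding retractable_def by blast
  have gE: "g \<in> End sm" and gr: "range g \<subseteq> U" using g(1) unfolding Hom_into_def by blast+
  obtain x where x: "g x \<noteq> 0" using g(2) by (auto simp: fun_eq_iff)
  have gxU: "g x \<in> U" using gr by blast
  have h0: "ui (g x) \<noteq> 0"
  proof
    assume "ui (g x) = 0"
    then have "g x \<in> {x. ui x = 0} \<inter> U" using gxU by blast
    then show False using ki x by blast
  qed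
  have hU: "ui (g x) \<in> U" using central_comm[OF ui gE, of x] gr by (metis rangeI subsetD)
  have "uj (ui (g x)) = 0" using fun_cong[OF orth, of "g x"] by simp
  then have "ui (g x) \<in> {x. uj x = 0} \<inter> U" using hU by blast
  then show False using kj h0 by blast
qed

theorem corollary3p7:
  fixes sm :: "'m::ab_group_add \<Rightarrow> 'r::ring_1 \<Rightarrow> 'm"
  assumes "right_module sm"
    and "centrally_endo_AIP sm"
    and "semi_projective sm"
    and "retractable sm"
    and "finite_uniform_dimension sm"
  shows "quasi_Baer_End sm"
proof -
  note rm = assms(1) and aip = assms(2) and ret = assms(4)
  obtain E where E: "essential sm E UNIV" "finite_direct_sum_of_uniform sm E"
    using assms(5) unfolding finite_uniform_dimension_def by blast
  obtain n :: nat and U :: "nat \<Rightarrow> 'm set" where U: "\<forall>i<n. uniform sm (U i)"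
    and Edef: "E = {\<Sum>i<n. x i | x. \<forall>i<n. x i \<in> U i}"
    and dir: "\<forall>x. (\<forall>i<n. x i \<in> U i) \<and> (\<Sum>i<n. x i) = 0 \<longrightarrow> (\<forall>i<n. x i = 0)"
    using E(2) unfolding finite_direct_sum_of_uniform_def by blast
  show ?thesis unfolding quasi_Baer_End_def
  proof (intro allI impI)
    fix I assume I: "ring_ideal (End sm) I"
    have IS: "I \<subseteq> End sm" using ideal_facts(1)[OF I] .
    have Ic: "\<forall>f\<in>End sm. \<forall>t\<in>I. f \<circ> t \<in> I" using ideal_facts(5)[OF I] by blast
    have fi: "fully_invariant sm (TM sm I)" using TM_fi[OF rm IS Ic] .
    define L where "L = l_ann sm (TM sm I)"
    have Li: "ring_ideal (End sm) L" and Lu: "centrally_s_unital (End sm) L"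
      using aip fi unfolding centrally_endo_AIP_def L_def by blast+
    have Lc: "L = {f\<in>End sm. \<forall>t\<in>I. f \<circ> t = (\<lambda>_. 0)}" unfolding L_def using l_ann_TM[OF rm IS] .
    have rL: "r_ann (End sm) I = L"
    proof
      show "r_ann (End sm) I \<subseteq> L"
      proof
        fix f assume "f \<in> r_ann (End sm) I"
        then have fE: "f \<in> End sm" and fh: "\<forall>g\<in>I. g \<circ> f = (\<lambda>_. 0)" unfolding r_ann_def by blast+
        have "f \<circ> g = (\<lambda>_. 0)" if g: "g \<in> I" for g
        proof -
          have gE: "g \<in> End sm" using g IS by blast
          have "\<forall>s\<in>End sm. (f \<circ> g) \<circ> s \<circ> (f \<circ> g) = (\<lambda>_. 0)"
          proof (intro ballI ext)
            fix s x assume s: "s \<in> End sm"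
            have "g \<circ> s \<in> I" using ideal_facts(6)[OF I g s] .
            then have "(g \<circ> s) \<circ> f = (\<lambda>_. 0)" using fh by blast
            then have "\<forall>y. g (s (f y)) = 0" by (simp add: fun_eq_iff)
            then have "g (s (f (g x))) = 0" by blast
            then show "((f \<circ> g) \<circ> s \<circ> (f \<circ> g)) x = 0" using End_zero[OF fE] by simp
          qed
          then show ?thesis using semiprime[OF rm aip End_comp[OF fE gE]] by blast
        qed
        then show "f \<in> L" unfolding Lc using fE by blast
      qed
    next
      show "L \<subseteq> r_ann (End sm) I"
      proof
        fix f assume "f \<in> L"
        then have fE: "f \<in> End sm" and fh: "\<forall>g\<in>I. f \<circ> g = (\<lambda>_. 0)" unfolding Lc by blast+
        have "g \<circ> f = (\<lambda>_. 0)" if g: "g \<in> I" for g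
        proof -
          have gE: "g \<in> End sm" using g IS by blast
          have "\<forall>s\<in>End sm. (g \<circ> f) \<circ> s \<circ> (g \<circ> f) = (\<lambda>_. 0)"
          proof (intro ballI ext)
            fix s x assume s: "s \<in> End sm"
            have "s \<circ> g \<in> I" using ideal_facts(5)[OF I g s] .
            then have "f \<circ> (s \<circ> g) = (\<lambda>_. 0)" using fh by blast
            then have "\<forall>y. f (s (g y)) = 0" by (simp add: fun_eq_iff)
            then have "f (s (g (f x))) = 0" by blast
            then show "((g \<circ> f) \<circ> s \<circ> (g \<circ> f)) x = 0" using End_zero[OF gE] by simp
          qed
          then show ?thesis using semiprime[OF rm aip End_comp[OF gE fE]] by blast
        qed
        then show "f \<in> r_ann (End sm) I" unfolding r_ann_def using fE by blast
      qed
    qed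
    have unit: "\<exists>z\<in>L. \<forall>a\<in>L. a \<circ> z = a"
    proof (rule ccontr)
      assume nou: "\<not> (\<exists>z\<in>L. \<forall>a\<in>L. a \<circ> z = a)"
      obtain z u where
        u: "\<forall>i<Suc n. central_in (End sm) (u i) \<and> u i \<noteq> (\<lambda>_. 0) \<and> u i \<circ> z = u i"
        and uo: "\<forall>i<Suc n. \<forall>j<Suc n. i \<noteq> j \<longrightarrow> u i \<circ> u j = (\<lambda>_. 0)"
        using chain[OF rm Li Lu nou, of "Suc n"] by blast
      have "\<forall>i\<in>{..<Suc n}. \<exists>l. l < n \<and> {x. u i x = 0} \<inter> U l = {0}"
      proof
        fix i assume "i \<in> {..<Suc n}"
        then have "central_in (End sm) (u i)" "u i \<noteq> (\<lambda>_. 0)" using u by auto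
        then show "\<exists>l. l < n \<and> {x. u i x = 0} \<inter> U l = {0}"
          using kernel_type_nonempty[OF rm aip ret E(1) U Edef dir] by blast
      qed
      then obtain phi where phi: "\<forall>i\<in>{..<Suc n}. phi i < n \<and> {x. u i x = 0} \<inter> U (phi i) = {0}"
        by (metis (no_types) bchoice)
      have "inj_on phi {..<Suc n}"
      proof (rule inj_onI)
        fix i j assume ij: "i \<in> {..<Suc n}" "j \<in> {..<Suc n}" "phi i = phi j"
        show "i = j"
        proof (rule ccontr)
          assume ne: "i \<noteq> j"
          have ci: "central_in (End sm) (u i)" and cj: "central_in (End sm) (u j)" using u ij by auto
          have orth: "u j \<circ> u i = (\<lambda>_. 0)" using uo ij ne by auto
          have l: "phi i < n" using phi ij by blast
          have ki: "{x. u i x = 0} \<inter> U (phi i) = {0}" using phi ij by blast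
          have kj: "{x. u j x = 0} \<inter> U (phi i) = {0}" using phi ij by metis
          show False using kernel_type_disjoint[OF rm ret _ ci cj orth ki kj] U l by blast
        qed
      qed
      moreover have "phi ` {..<Suc n} \<subseteq> {..<n}" using phi by auto
      ultimately have "card {..<Suc n} \<le> card {..<n}" using card_inj_on_le by blast
      then show False by simp
    qed
    then obtain z where z: "z \<in> L" "\<forall>a\<in>L. a \<circ> z = a" by blast
    obtain z' where z': "z' \<in> L" "central_in (End sm) z'" "z \<circ> z' = z"
      using Lu z(1) unfolding centrally_s_unital_def by blast
    have LS: "L \<subseteq> End sm" using ideal_facts(1)[OF Li] .
    have "z' \<circ> z = z'" using z(2) z'(1) by blast
    moreover have "z \<circ> z' = z' \<circ> z" using z'(2) z(1) LS unfolding central_in_def by blast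
    ultimately have "z = z'" using z'(3) by simp
    then have zc: "central_in (End sm) z" using z'(2) by simp
    have zE: "z \<in> End sm" using z(1) LS by blast
    show "\<exists>e\<in>End sm. e \<circ> e = e \<and> r_ann (End sm) I = {e \<circ> s |s. s \<in> End sm}"
    proof (intro bexI conjI)
      show "z \<circ> z = z" using z by blast
      show "z \<in> End sm" using zE .
      show "r_ann (End sm) I = {z \<circ> s |s. s \<in> End sm}"
      proof
        show "r_ann (End sm) I \<subseteq> {z \<circ> s |s. s \<in> End sm}"
        proof
          fix f assume "f \<in> r_ann (End sm) I"
          then have fL: "f \<in> L" using rL by simp
          then have fE: "f \<in> End sm" using LS by blast
          have "f = f \<circ> z" using z(2) fL by simp
          also have "\<dots> = z \<circ> f" using zc fE unfolding central_in_def by blast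
          finally show "f \<in> {z \<circ> s |s. s \<in> End sm}" using fE by blast
        qed
        show "{z \<circ> s |s. s \<in> End sm} \<subseteq> r_ann (End sm) I"
        proof
          fix f assume "f \<in> {z \<circ> s |s. s \<in> End sm}"
          then obtain s where s: "s \<in> End sm" "f = z \<circ> s" by blast
          have "z \<circ> s \<in> L" using ideal_facts(6)[OF Li z(1) s(1)] .
          then show "f \<in> r_ann (End sm) I" using s(2) rL by simp
        qed
      qed
    qed
  qed
qed


end
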